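(* For all $k\in\mathbb N$ the following hold in the $q$-shuffle algebra $\mathbb V$: $$[W_0,W_{k+1}]=[W_{-k},W_1]=(1-q^{-2})(\tilde G_{k+1}-G_{k+1}),$$ $$[W_0,G_{k+1}]_q=[\tilde G_{k+1},W_0]_q=(q-q^{-1})W_{-k-1},$$ $$[G_{k+1},W_1]_q=[W_1,\tilde G_{k+1}]_q=(q-q^{-1})W_{k+2}.$$
   Context: Let $\mathbb F$ be a field and let $q\in\mathbb F$ be nonzero and not a root of unity. Let $\mathbb V$ be the free associative $\mathbb F$-algebra on noncommuting $x,y$, with basis the words (including $1$). Juxtaposition denotes concatenation. Set $\langle x,x\rangle=\langle y,y\rangle=2$ and $\langle x,y\rangle=\langle y,x\rangle=-2$. The $q$-shuffle product $\star$ is the bilinear product determined as follows: - $1\star v=v\star 1=v$; - for nontrivial words $u=u_1\cdots u_r$ and $v=v_1\cdots v_s$, $$u\star v=u_1((u_2\cdots u_r)\star v)+v_1(u\star(v_2\cdots v_s))q^{\langle u_1,v_1\rangle+\cdots+\langle u_r,v_1\rangle}.$$ This makes $\mathbb V$ an associative algebra, the $q$-shuffle algebra. Write $[a,b]=a\star b-b\star a$ and $[a,b]_q=q\,a\star b-q^{-1}b\star a$. For $k\in\mathbb N$: - $W_{-k}=xyx\cdots x$ is the alternating word of length $2k+1$ beginning and ending with $x$; - $W_{k+1}=yxy\cdots y$ is the alternating word of length $2k+1$ beginning and ending with $y$; - $G_k=yxyx\cdots yx$ is the word of length $2k$; - $\tilde G_k=xyxy\cdots xy$ is the word of length $2k$;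 - $G_0=\tilde G_0=1$. *)

theory Defs
  imports Main "HOL-Library.Poly_Mapping"
begin

text \<open>The free associative algebra V on x, y over a field 'a is modelled as the
  finitely supported 'a-valued functions on words (basis = words).\<close>

datatype letter = X | Y

type_synonym word = "letter list"
type_synonym 'a vv = "word \<Rightarrow>\<^sub>0 'a"

definition ip :: "letter \<Rightarrow> letter \<Rightarrow> int" where
  "ip a b = (if a = b then 2 else -2)"

definition wd :: "word \<Rightarrow> 'a::field vv" where
  "wd w = Poly_Mapping.single w 1"

definition scale :: "'a::field \<Rightarrow> 'a vv \<Rightarrow> 'a vv" where
  "scale c p = Poly_Mapping.map (\<lambda>x. c * x) p"

definition prefix :: "letter \<Rightarrow> 'a::field vv \<Rightarrow> 'a vv" where
  "prefix a p = (\<Sum>w\<in>Poly_Mapping.keys p. Poly_Mapping.single (a # w) (Poly_Mapping.lookup p w))"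

fun qsh :: "'a::field \<Rightarrow> word \<Rightarrow> word \<Rightarrow> 'a vv" where
  "qsh q [] v = wd v"
| "qsh q (a # u) [] = wd (a # u)"
| "qsh q (a # u) (b # v) =
     prefix a (qsh q u (b # v))
     + scale (q powi (\<Sum>c\<leftarrow>a # u. ip c b)) (prefix b (qsh q (a # u) v))"

definition star :: "'a::field \<Rightarrow> 'a vv \<Rightarrow> 'a vv \<Rightarrow> 'a vv" where
  "star q p r = (\<Sum>u\<in>Poly_Mapping.keys p. \<Sum>v\<in>Poly_Mapping.keys r. scale (Poly_Mapping.lookup p u * Poly_Mapping.lookup r v) (qsh q u v))"

definition comm :: "'a::field \<Rightarrow> 'a vv \<Rightarrow> 'a vv \<Rightarrow> 'a vv" where
  "comm q a b = star q a b - star q b a"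

definition qcomm :: "'a::field \<Rightarrow> 'a vv \<Rightarrow> 'a vv \<Rightarrow> 'a vv" where
  "qcomm q a b = scale q (star q a b) - scale (inverse q) (star q b a)"

fun alt :: "letter \<Rightarrow> nat \<Rightarrow> word" where
  "alt a 0 = []"
| "alt a (Suc n) = a # alt (if a = X then Y else X) n"

definition W :: "int \<Rightarrow> word" where
  "W i = (if i \<le> 0 then alt X (2 * nat (- i) + 1) else alt Y (2 * nat i - 1))"

definition G :: "nat \<Rightarrow> word" where
  "G k = alt Y (2 * k)"

definition Gt :: "nat \<Rightarrow> word" where
  "Gt k = alt X (2 * k)"

end

theory Submission
  imports Defs
begin

lemma lookup_scale[simp]: "Poly_Mapping.lookup (scale c p) k = c * Poly_Mapping.lookup p k"
  unfolding scale_def by transfer (auto simp: when_def)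

lemma lookup_prefix: "Poly_Mapping.lookup (prefix a p) u =
   (case u of [] \<Rightarrow> 0 | c # w \<Rightarrow> if c = a then Poly_Mapping.lookup p w else 0)"
proof -
  have "Poly_Mapping.lookup (prefix a p) u = (\<Sum>w\<in>Poly_Mapping.keys p. (Poly_Mapping.lookup p w when a # w = u))"
    unfolding prefix_def by (simp add: lookup_sum lookup_single)
  also have "\<dots> = (case u of [] \<Rightarrow> 0 | c # w \<Rightarrow> if c = a then Poly_Mapping.lookup p w else 0)"
  proof (cases u)
    case Nil then show ?thesis by (simp add: when_def)
  next
    case (Cons c w)
    show ?thesis
    proof (cases "c = a")
      case True
      have "(\<Sum>w'\<in>Poly_Mapping.keys p. (Poly_Mapping.lookup p w' when a # w' = u))
          = (\<Sum>w'\<in>Poly_Mapping.keys p. (if w' = w then Poly_Mapping.lookup p w' else 0))"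
        using Cons True by (intro sum.cong) (auto simp: when_def)
      also have "\<dots> = Poly_Mapping.lookup p w"
        by (simp add: sum.delta in_keys_iff)
      finally show ?thesis using Cons True by simp
    next
      case False then show ?thesis using Cons by (simp add: when_def)
    qed
  qed
  finally show ?thesis .
qed

lemma lookup_wd: "Poly_Mapping.lookup (wd w) u = (if u = w then 1 else 0)"
  by (simp add: wd_def lookup_single when_def)

lemma prefix_add[simp]: "prefix a (p + r) = prefix a p + prefix a r"
  by (rule poly_mapping_eqI) (simp add: lookup_prefix lookup_add split: list.split)
lemma prefix_diff[simp]: "prefix a (p - r) = prefix a p - prefix a r"
  by (rule poly_mapping_eqI) (simp add: lookup_prefix lookup_minus split: list.split)
lemma prefix_scale[simp]: "prefix a (scale c p) = scale c (prefix a p)"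
  by (rule poly_mapping_eqI) (simp add: lookup_prefix split: list.split)
lemma prefix_wd[simp]: "prefix a (wd w) = wd (a # w)"
  by (rule poly_mapping_eqI) (auto simp: lookup_prefix lookup_wd split: list.split)

lemma scale_one[simp]: "scale 1 p = p"
  by (rule poly_mapping_eqI) simp

lemma star_wd: "star q (wd u) (wd v) = qsh q u v"
  by (simp add: star_def wd_def)

lemma L_nil[simp]: "qsh q [a] [] = wd [a]" by simp
lemma L_cons: "qsh q [a] (b # w) = wd (a # b # w) + scale (q powi ip a b) (prefix b (qsh q [a] w))"
  by simp
lemma R_cons: "qsh q (b # w) [a] = prefix b (qsh q w [a]) + scale (q powi (\<Sum>c\<leftarrow>b # w. ip c a)) (wd (a # b # w))"
  by simp

lemma alt_a: "a \<noteq> b \<Longrightarrow> alt a (Suc n) = a # alt b n"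
  by (cases a; cases b; simp)

lemma ipab: "a \<noteq> b \<Longrightarrow> ip a b = -2" by (simp add: ip_def)
lemma ipaa: "ip a a = 2" by (simp add: ip_def)

lemma s_even: "a \<noteq> b \<Longrightarrow> (\<Sum>c\<leftarrow>alt b (2*m). ip c a) = 0 \<and> (\<Sum>c\<leftarrow>alt a (2*m). ip c a) = 0"
proof (induction m)
  case 0 then show ?case by simp
next
  case (Suc m)
  have "2 * Suc m = Suc (Suc (2*m))" by simp
  have n: "b \<noteq> a" using Suc.prems by auto
  show ?case using Suc alt_a[OF Suc.prems] alt_a[OF n] ipab[OF Suc.prems] ipab[OF n] ipaa
    by (simp del: alt.simps(2))
qed

lemma s_odd: "a \<noteq> b \<Longrightarrow> (\<Sum>c\<leftarrow>alt b (2*m+1). ip c a) = -2"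
  using s_even[of a b m] alt_a[of b a] ipab[of b a] by (simp del: alt.simps(2) add: eq_commute[of b a])



lemma qm2: "(q::'a::field) powi (-2) = inverse (q^2)"
  by (simp add: power_int_def power_inverse)
lemma qp2: "(q::'a::field) powi 2 = q^2"
  by (simp add: power_int_def)

lemma claimA:
  assumes ab: "a \<noteq> b" and q: "q \<noteq> 0"
  shows "scale q (qsh q [a] (alt b (2*m))) - scale (inverse q) (qsh q (alt b (2*m)) [a])
         = scale (q - inverse q) (wd (alt a (2*m+1)))"
proof (induction m)
  case 0 then show ?case
    by (intro poly_mapping_eqI) (simp add: lookup_minus lookup_wd algebra_simps)
next
  case (Suc m)
  have ba: "b \<noteq> a" using ab by auto
  define w where "w = alt b (2*m)"
  have e1: "alt b (2 * Suc m) = b # a # w" unfolding w_def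
    using alt_a[OF ab] alt_a[OF ba] by (simp del: alt.simps(2))
  have e2: "alt a (2*m+1) = a # w" unfolding w_def
    using alt_a[OF ab] by (simp del: alt.simps(2))
  have e3: "alt a (2 * Suc m+1) = a # b # a # w" unfolding w_def
    using alt_a[OF ab] alt_a[OF ba] by (simp del: alt.simps(2))
  have sw: "(\<Sum>c\<leftarrow>w. ip c a) = 0" unfolding w_def using s_even[OF ab] by blast
  let ?L = "qsh q [a] w" and ?R = "qsh q w [a]"
  have key: "scale q (qsh q [a] (b#a#w)) - scale (inverse q) (qsh q (b#a#w) [a])
    = scale (q - inverse q) (wd (a#b#a#w)) + scale (inverse q - q) (wd (b#a#a#w))
      + prefix b (prefix a (scale q ?L - scale (inverse q) ?R))"
    apply (simp only: L_cons R_cons)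
    apply (intro poly_mapping_eqI)
    apply (simp add: lookup_minus lookup_add sw ipab[OF ab] ipab[OF ba] ipaa)
    using q apply (simp add: qm2 qp2 field_simps power2_eq_square)
    done
  show ?case
    unfolding e1 e3 key Suc[folded w_def, unfolded e2]
    by (intro poly_mapping_eqI) (simp add: lookup_minus lookup_add lookup_wd algebra_simps)
qed

lemma claimB:
  assumes ab: "a \<noteq> b" and q: "q \<noteq> 0"
  shows "scale q (qsh q (alt a (2*m)) [a]) - scale (inverse q) (qsh q [a] (alt a (2*m)))
         = scale (q - inverse q) (wd (alt a (2*m+1)))"
proof (induction m)
  case 0 then show ?case
    by (intro poly_mapping_eqI) (simp add: lookup_minus lookup_wd algebra_simps)
next
  case (Suc m)
  have ba: "b \<noteq> a" using ab by auto
  define w where "w = alt a (2*m)"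
  have e1: "alt a (2 * Suc m) = a # b # w" unfolding w_def
    using alt_a[OF ab] alt_a[OF ba] by (simp del: alt.simps(2))
  have e3: "alt a (2 * Suc m+1) = a # b # alt a (2*m+1)"
    using alt_a[OF ab] alt_a[OF ba] by (simp del: alt.simps(2))
  have sw: "(\<Sum>c\<leftarrow>w. ip c a) = 0" unfolding w_def using s_even[OF ab] by blast
  let ?L = "qsh q [a] w" and ?R = "qsh q w [a]"
  have key: "scale q (qsh q (a#b#w) [a]) - scale (inverse q) (qsh q [a] (a#b#w))
    = prefix a (prefix b (scale q ?R - scale (inverse q) ?L))"
    apply (simp only: L_cons R_cons)
    apply (intro poly_mapping_eqI)
    apply (simp add: lookup_minus lookup_add sw ipab[OF ab] ipab[OF ba] ipaa)
    using q apply (simp add: qm2 qp2 field_simps power2_eq_square)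
    done
  show ?case
    unfolding e1 e3 key Suc[folded w_def]
    by simp
qed

lemma claimC:
  assumes ab: "a \<noteq> b" and q: "q \<noteq> 0"
  shows "qsh q [a] (alt b (2*m+1)) - qsh q (alt b (2*m+1)) [a]
         = scale (1 - inverse (q^2)) (wd (alt a (2*m+2)) - wd (alt b (2*m+2)))"
proof (induction m)
  have ba: "b \<noteq> a" using ab by auto
  have e: "alt b (2*0+1) = [b]" "alt a (2*0+2) = [a,b]" "alt b (2*0+2) = [b,a]"
    using alt_a[OF ab] alt_a[OF ba] by (simp_all del: alt.simps(2))
  case 0 show ?case
    unfolding e
    apply (simp only: L_cons R_cons)
    apply (intro poly_mapping_eqI)
    using ipab[OF ab] ipab[OF ba] q by (simp add: lookup_minus lookup_add qm2 algebra_simps)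
next
  case (Suc m)
  have ba: "b \<noteq> a" using ab by auto
  define w where "w = alt b (2*m+1)"
  have e1: "alt b (2 * Suc m+1) = b # a # w" unfolding w_def
    using alt_a[OF ab] alt_a[OF ba] by (simp del: alt.simps(2))
  have e2: "alt a (2*m+2) = a # w" unfolding w_def
    using alt_a[OF ab] by (simp del: alt.simps(2))
  have e3: "alt a (2 * Suc m+2) = a # b # a # w" unfolding w_def
    using alt_a[OF ab] alt_a[OF ba] by (simp del: alt.simps(2))
  have e4: "alt b (2 * Suc m+2) = b # a # alt b (2*m+2)"
    using alt_a[OF ab] alt_a[OF ba] by (simp del: alt.simps(2))
  have sw: "(\<Sum>c\<leftarrow>w. ip c a) = -2" unfolding w_def using s_odd[OF ab] by blast
  let ?L = "qsh q [a] w" and ?R = "qsh q w [a]"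
  have key: "qsh q [a] (b#a#w) - qsh q (b#a#w) [a]
    = scale (1 - inverse (q^2)) (wd (a#b#a#w) - wd (b#a#a#w))
      + prefix b (prefix a (?L - ?R))"
    apply (simp only: L_cons R_cons)
    apply (intro poly_mapping_eqI)
    apply (simp add: lookup_minus lookup_add sw ipab[OF ab] ipab[OF ba] ipaa)
    using q apply (simp add: qm2 qp2 field_simps power2_eq_square)
    done
  show ?case
    unfolding e1 e3 e4 key Suc[folded w_def, unfolded e2]
    by (intro poly_mapping_eqI) (simp add: lookup_minus lookup_add lookup_wd algebra_simps)
qed

lemma W_vals: "W 0 = [X]" "W 1 = [Y]" "W (int k + 1) = alt Y (2*k+1)" "W (- int k) = alt X (2*k+1)"
  "W (- int k - 1) = alt X (2*(Suc k)+1)" "W (int k + 2) = alt Y (2*(Suc k)+1)"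
  "G (k+1) = alt Y (2*Suc k)" "Gt (k+1) = alt X (2*Suc k)"
  by (simp_all add: W_def G_def Gt_def nat_add_distrib nat_diff_distrib)

theorem proposition5p7:
  fixes q :: "'a::field" and k :: nat
  assumes "q \<noteq> 0" and "\<forall>n::nat. n > 0 \<longrightarrow> q ^ n \<noteq> 1"
  shows "comm q (wd (W 0)) (wd (W (int k + 1))) = comm q (wd (W (- int k))) (wd (W 1))
       \<and> comm q (wd (W (- int k))) (wd (W 1))
           = scale (1 - inverse (q ^ 2)) (wd (Gt (k + 1)) - wd (G (k + 1)))
       \<and> qcomm q (wd (W 0)) (wd (G (k + 1))) = qcomm q (wd (Gt (k + 1))) (wd (W 0))
       \<and> qcomm q (wd (Gt (k + 1))) (wd (W 0)) = scale (q - inverse q) (wd (W (- int k - 1)))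
       \<and> qcomm q (wd (G (k + 1))) (wd (W 1)) = qcomm q (wd (W 1)) (wd (Gt (k + 1)))
       \<and> qcomm q (wd (W 1)) (wd (Gt (k + 1))) = scale (q - inverse q) (wd (W (int k + 2)))"
proof -
  have XY: "X \<noteq> Y" "Y \<noteq> X" by auto
  note q = assms(1)
  have C1: "comm q (wd (W 0)) (wd (W (int k + 1))) = scale (1 - inverse (q ^ 2)) (wd (Gt (k + 1)) - wd (G (k + 1)))"
    unfolding comm_def star_wd W_vals using claimC[OF XY(1) q, of k] by simp
  have C2: "comm q (wd (W (- int k))) (wd (W 1)) = scale (1 - inverse (q ^ 2)) (wd (Gt (k + 1)) - wd (G (k + 1)))"
  proof -
    have "comm q (wd (W (- int k))) (wd (W 1)) = - (qsh q [Y] (alt X (2*k+1)) - qsh q (alt X (2*k+1)) [Y])"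
      unfolding comm_def star_wd W_vals by simp
    also have "\<dots> = scale (1 - inverse (q ^ 2)) (wd (Gt (k + 1)) - wd (G (k + 1)))"
      unfolding claimC[OF XY(2) q, of k] W_vals
      by (intro poly_mapping_eqI) (simp add: lookup_minus algebra_simps)
    finally show ?thesis .
  qed
  have A1: "qcomm q (wd (W 0)) (wd (G (k + 1))) = scale (q - inverse q) (wd (W (- int k - 1)))"
    unfolding qcomm_def star_wd W_vals using claimA[OF XY(1) q, of "Suc k"] by simp
  have B1: "qcomm q (wd (Gt (k + 1))) (wd (W 0)) = scale (q - inverse q) (wd (W (- int k - 1)))"
    unfolding qcomm_def star_wd W_vals using claimB[OF XY(1) q, of "Suc k"] by simp
  have B2: "qcomm q (wd (G (k + 1))) (wd (W 1)) = scale (q - inverse q) (wd (W (int k + 2)))"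
    unfolding qcomm_def star_wd W_vals using claimB[OF XY(2) q, of "Suc k"] by simp
  have A2: "qcomm q (wd (W 1)) (wd (Gt (k + 1))) = scale (q - inverse q) (wd (W (int k + 2)))"
    unfolding qcomm_def star_wd W_vals using claimA[OF XY(2) q, of "Suc k"] by simp
  show ?thesis using C1 C2 A1 B1 B2 A2 by simp
qed

end
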